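(* Let $\mathbb{F}$ be a field and let $q\in\mathbb{F}$ be a root of unity with $q\neq 1$; let $p\geq 2$ be the least positive integer with $q^p=1$. Let $\mathcal{H}$ be the unital associative $\mathbb{F}$-algebra generated by $A,B$ subject to $AB-qBA=I$, with $[f,g]=fg-gf$ and $\Lambda:=AB-BA$. Let $\mathcal{L}$ be the Lie subalgebra of $\mathcal{H}$ generated by $A,B$, and let $\mathcal{N}$ be the linear subspace spanned by all $B^m\Lambda^n$ and $\Lambda^nA^m$ with $m,n$ positive integers both congruent to $0$ modulo $p$. Then the sum $\mathcal{L}+\mathcal{N}$ is direct, i.e. $\mathcal{L}\cap\mathcal{N}=\{0\}$.
   Context: The elements $\Lambda^k$, $\Lambda^kA^l$, $B^l\Lambda^k$ ($k\geq 0$, $l\geq 1$ integers, $\Lambda^0=I$) form a basis of $\mathcal{H}$. *)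

theory Defs
  imports Complex_Main
begin

definition is_falgebra :: "('f::field \<Rightarrow> 'h::ring_1 \<Rightarrow> 'h) \<Rightarrow> bool" where
  "is_falgebra sc \<longleftrightarrow> module sc \<and>
     (\<forall>c x y. sc c (x * y) = sc c x * y \<and> sc c (x * y) = x * sc c y)"

definition lie_subalgebra :: "('f::field \<Rightarrow> 'h::ring_1 \<Rightarrow> 'h) \<Rightarrow> 'h set \<Rightarrow> bool" where
  "lie_subalgebra sc S \<longleftrightarrow> module.subspace sc S \<and> (\<forall>x\<in>S. \<forall>y\<in>S. x * y - y * x \<in> S)"

definition lie_generated :: "('f::field \<Rightarrow> 'h::ring_1 \<Rightarrow> 'h) \<Rightarrow> 'h set \<Rightarrow> 'h set" where
  "lie_generated sc X = \<Inter>{S. X \<subseteq> S \<and> lie_subalgebra sc S}"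

definition Lam :: "'h::ring_1 \<Rightarrow> 'h \<Rightarrow> 'h" where
  "Lam A B = A * B - B * A"

text \<open>The PBW-type basis: index (k,l) gives Lambda^k if l = 0, Lambda^k A^l if l > 0,
  and B^(-l) Lambda^k if l < 0.\<close>
definition hbasis :: "'h::ring_1 \<Rightarrow> 'h \<Rightarrow> nat \<times> int \<Rightarrow> 'h" where
  "hbasis A B i = (case i of (k, l) \<Rightarrow>
     if l = 0 then Lam A B ^ k
     else if l > 0 then Lam A B ^ k * A ^ nat l
     else B ^ nat (- l) * Lam A B ^ k)"

definition Nset :: "'h::ring_1 \<Rightarrow> 'h \<Rightarrow> nat \<Rightarrow> 'h set" where
  "Nset A B p = {B ^ m * Lam A B ^ n | m n. 0 < m \<and> 0 < n \<and> p dvd m \<and> p dvd n}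
              \<union> {Lam A B ^ n * A ^ m | m n. 0 < m \<and> 0 < n \<and> p dvd m \<and> p dvd n}"

end

theory Submission
  imports Defs
begin

locale hsetup =
  fixes sc :: "'f::field \<Rightarrow> 'h::ring_1 \<Rightarrow> 'h" and q :: 'f and A B :: 'h
  assumes alg: "is_falgebra sc" and rel: "A * B - sc q (B * A) = 1"
begin

interpretation M: vector_space sc
  using alg unfolding is_falgebra_def module_iff_vector_space by simp

lemma scl: "sc c (x * y) = sc c x * y" using alg unfolding is_falgebra_def by blast
lemma scr: "sc c (x * y) = x * sc c y" using alg unfolding is_falgebra_def by blast

lemma sc_left: "sc c x = sc c 1 * x" using scl[of c 1 x] by simp
lemma sc_right: "sc c x = x * sc c 1" using scr[of c x 1] by simp
lemma ic: "sc c 1 * x = x * sc c 1" using sc_left sc_right by metis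
lemma imult: "sc c 1 * sc d 1 = sc (c*d) 1" by (metis M.scale_scale sc_left)
lemma ipow: "sc c 1 ^ n = sc (c^n) 1"
  by (induction n) (auto simp: imult M.scale_one mult.commute)
lemma idiff: "sc (c - d) 1 = sc c 1 - sc d 1" by (rule M.scale_left_diff_distrib)
lemma ione: "sc 1 1 = 1" by simp
lemma ipow_comm: "sc c 1 ^ n * x = x * sc c 1 ^ n" by (simp add: ipow ic)

abbreviation "Q \<equiv> sc q 1"
abbreviation "L \<equiv> Lam A B"

lemma rel1: "A * B = 1 + Q * (B * A)" using rel sc_left[of q "B*A"] by (simp add: algebra_simps)
lemma L1: "L = 1 + (Q - 1) * (B * A)" unfolding Lam_def by (simp add: rel1 algebra_simps)
lemma LBA: "(Q - 1) * (B * A) = L - 1" by (simp add: L1)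

lemma Qc: "Q * x = x * Q" by (rule ic)
lemma Q1c: "(Q - 1) * x = x * (Q - 1)" by (metis idiff ione ic)
lemma pullQ: "x * (Q * y) = Q * (x * y)" by (metis Qc mult.assoc)
lemma pullQ1: "x * ((Q - 1) * y) = (Q - 1) * (x * y)" by (metis Q1c mult.assoc)
lemma pullQp: "x * (Q^n * y) = Q^n * (x * y)" by (metis ipow_comm mult.assoc)
lemma pullQQ: "Q^n * (Q * y) = Q * (Q^n * y)" by (metis power_commutes mult.assoc)
lemma powc: "a^n * (a * x) = a * (a^n * x)" for a :: 'h by (metis power_commutes mult.assoc)
lemmas pulls = powc power_commutes pullQ[of A] pullQ[of B] pullQ[of L] pullQ[of "A^n" for n] pullQ[of "B^n" for n]
  pullQ[of "L^n" for n] pullQp[of A] pullQp[of B] pullQp[of L] pullQp[of "A^n" for n]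
  pullQp[of "B^n" for n] pullQp[of "L^n" for n] pullQQ pullQ1[of A] pullQ1[of B] pullQ1[of L]
  pullQ1[of "A^n" for n] pullQ1[of "B^n" for n] pullQ1[of "L^n" for n]

lemma AL: "A * L = Q * (L * A)"
proof -
  have "A * L = A + (Q - 1) * ((A * B) * A)" by (simp add: L1 algebra_simps pulls)
  also have "\<dots> = Q * (1 + (Q - 1) * (B * A)) * A"
    by (simp add: rel1 algebra_simps pulls)
  also have "\<dots> = Q * (L * A)" by (simp add: L1 mult.assoc)
  finally show ?thesis .
qed

lemma LB: "L * B = Q * (B * L)"
proof -
  have "L * B = B + (Q - 1) * (B * (A * B))" by (simp add: L1 distrib_right mult.assoc)
  also have "\<dots> = B + (Q - 1) * B + (Q - 1) * (Q * (B * (B * A)))"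
    by (simp add: rel1 distrib_left pulls add.assoc)
  also have "\<dots> = Q * B + Q * ((Q - 1) * (B * (B * A)))"
    by (simp add: pulls algebra_simps)
  also have "\<dots> = Q * (B * L)" by (simp add: L1 distrib_left mult.assoc pulls)
  finally show ?thesis .
qed

lemma ALk: "A * L^k = Q^k * (L^k * A)"
proof (induction k)
  case (Suc k)
  have "A * L^Suc k = (A * L) * L^k" by (simp add: mult.assoc)
  also have "\<dots> = Q * (L * (A * L^k))" by (simp add: AL mult.assoc)
  also have "\<dots> = Q^Suc k * (L^Suc k * A)" using Suc by (simp add: pulls mult.assoc)
  finally show ?case .
qed simp

lemma LkB: "L^k * B = Q^k * (B * L^k)"
proof (induction k)
  case (Suc k)
  have "L^Suc k * B = L^k * (L * B)" by (simp only: mult.assoc power_Suc2)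
  also have "\<dots> = Q * ((L^k * B) * L)" by (simp add: LB pulls mult.assoc)
  also have "\<dots> = Q^Suc k * (B * L^Suc k)" using Suc by (simp add: pulls mult.assoc power_Suc2 power_commutes)
  finally show ?case .
qed simp

lemma ABm: "(Q - 1) * (A * B^(Suc n)) = B^n * (Q^(Suc n) * L - 1)"
proof (induction n)
  case 0
  show ?case by (simp add: rel1 L1 algebra_simps pulls)
next
  case (Suc n)
  have "(Q - 1) * (A * B^(Suc (Suc n))) = ((Q - 1) * (A * B^(Suc n))) * B"
    by (simp only: power_Suc2[of B "Suc n"] mult.assoc)
  also have "\<dots> = (B^n * (Q^(Suc n) * L - 1)) * B" using Suc by simp
  also have "\<dots> = B^n * (Q^(Suc n) * (L * B) - B)" by (simp add: algebra_simps)
  also have "\<dots> = B^(Suc n) * (Q^(Suc (Suc n)) * L - 1)"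
    by (simp add: LB algebra_simps pulls power_Suc2)
  finally show ?case .
qed

lemma AnB: "(Q - 1) * (A^(Suc n) * B) = (Q^(Suc n) * L - 1) * A^n"
proof (induction n)
  case 0
  show ?case by (simp add: rel1 L1 algebra_simps pulls)
next
  case (Suc n)
  have "(Q - 1) * (A^(Suc (Suc n)) * B) = A * ((Q - 1) * (A^(Suc n) * B))"
    by (simp add: mult.assoc pullQ1)
  also have "\<dots> = A * ((Q^(Suc n) * L - 1) * A^n)" using Suc by simp
  also have "\<dots> = (Q^(Suc n) * (A * L) - A) * A^n" by (simp add: algebra_simps pulls)
  also have "\<dots> = (Q^(Suc (Suc n)) * L - 1) * A^(Suc n)"
    by (simp add: AL algebra_simps pulls power_Suc2)
  finally show ?case .
qed

lemma BLk: "Q^k * (B * L^k) = L^k * B" by (simp add: LkB)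

lemma com_a: "L^k * A^l * A - A * (L^k * A^l) = (1 - Q^k) * (L^k * A^(Suc l))"
proof -
  have "A * (L^k * A^l) = (A * L^k) * A^l" by (simp only: mult.assoc)
  also have "\<dots> = Q^k * (L^k * A^(Suc l))" by (simp only: ALk mult.assoc power_Suc)
  finally have 1: "A * (L^k * A^l) = Q^k * (L^k * A^(Suc l))" .
  have 2: "L^k * A^l * A = L^k * A^(Suc l)" by (simp only: mult.assoc power_Suc2)
  show ?thesis unfolding 1 2 by (simp add: algebra_simps)
qed

lemma com_c: "B^m * L^k * B - B * (B^m * L^k) = (Q^k - 1) * (B^(Suc m) * L^k)"
proof -
  have "B^m * L^k * B = B^m * (Q^k * (B * L^k))" by (simp only: mult.assoc LkB)
  also have "\<dots> = Q^k * (B^m * (B * L^k))" by (rule pullQp)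
  also have "\<dots> = Q^k * (B^(Suc m) * L^k)" by (simp only: mult.assoc power_Suc2)
  finally have 1: "B^m * L^k * B = Q^k * (B^(Suc m) * L^k)" .
  have 2: "B * (B^m * L^k) = B^(Suc m) * L^k" by (simp only: mult.assoc power_Suc)
  show ?thesis unfolding 1 2 by (simp add: algebra_simps)
qed

lemma com_b: "Q^k * (Q - 1) * (L^k * A^(Suc n) * B - B * (L^k * A^(Suc n)))
   = (Q^(k + Suc n) - 1) * (L^(Suc k) * A^n) + (1 - Q^k) * (L^k * A^n)"
proof -
  have 1: "Q^k * (Q - 1) * (L^k * A^(Suc n) * B) = Q^k * (L^k * ((Q - 1) * (A^(Suc n) * B)))"
    by (simp add: mult.assoc pulls)
  have 2: "Q^k * (Q - 1) * (B * (L^k * A^(Suc n))) = L^k * (((Q - 1) * (B * A)) * A^n)"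
  proof -
    have "Q^k * (Q - 1) * (B * (L^k * A^(Suc n))) = (Q - 1) * ((Q^k * (B * L^k)) * A * A^n)"
      by (simp add: mult.assoc pulls pullQ1[of "Q^k"])
    also have "\<dots> = L^k * (((Q - 1) * (B * A)) * A^n)" by (simp add: BLk mult.assoc pulls)
    finally show ?thesis .
  qed
  have "Q^k * (Q - 1) * (L^k * A^(Suc n) * B - B * (L^k * A^(Suc n)))
     = Q^k * (L^k * ((Q^(Suc n) * L - 1) * A^n)) - L^k * ((L - 1) * A^n)"
    by (simp only: right_diff_distrib[of "Q^k * (Q - 1)"] 1 2 AnB LBA)
  also have "\<dots> = (Q^(k + Suc n) - 1) * (L^(Suc k) * A^n) + (1 - Q^k) * (L^k * A^n)"
    by (simp add: algebra_simps pulls power_add)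
  finally show ?thesis .
qed

lemma com_d: "Q^k * (Q - 1) * (B^(Suc n) * L^k * A - A * (B^(Suc n) * L^k))
   = (1 - Q^(k + Suc n)) * (B^n * L^(Suc k)) + (Q^k - 1) * (B^n * L^k)"
proof -
  have 1: "Q^k * (Q - 1) * (B^(Suc n) * L^k * A) = B^n * (L^k * ((Q - 1) * (B * A)))"
  proof -
    have "Q^k * (Q - 1) * (B^(Suc n) * L^k * A) = (Q - 1) * (B^n * ((Q^k * (B * L^k)) * A))"
      by (simp add: mult.assoc pulls pullQ1[of "Q^k"])
    also have "\<dots> = B^n * (L^k * ((Q - 1) * (B * A)))" by (simp add: BLk mult.assoc pulls)
    finally show ?thesis .
  qed
  have 2: "Q^k * (Q - 1) * (A * (B^(Suc n) * L^k)) = Q^k * (((Q - 1) * (A * B^(Suc n))) * L^k)"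
    by (simp add: mult.assoc pulls)
  have "Q^k * (Q - 1) * (B^(Suc n) * L^k * A - A * (B^(Suc n) * L^k))
     = B^n * (L^k * (L - 1)) - Q^k * ((B^n * (Q^(Suc n) * L - 1)) * L^k)"
    by (simp only: right_diff_distrib[of "Q^k * (Q - 1)"] 1 2 ABm LBA)
  also have "\<dots> = (1 - Q^(k + Suc n)) * (B^n * L^(Suc k)) + (Q^k - 1) * (B^n * L^k)"
    by (simp add: algebra_simps pulls power_add)
  finally show ?thesis .
qed

end

locale hmain = hsetup sc q A B for sc :: "'f::field \<Rightarrow> 'h::ring_1 \<Rightarrow> 'h" and q A B +
  fixes p :: nat
  assumes basis_inj: "inj (hbasis A B)"
    and basis_indep: "module.independent sc (range (hbasis A B))"
    and basis_span: "module.span sc (range (hbasis A B)) = UNIV"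
    and q_ne1: "q \<noteq> 1"
    and p_pos: "0 < p"
    and q_p: "q ^ p = 1"
begin

interpretation M: vector_space sc
  using alg unfolding is_falgebra_def module_iff_vector_space by simp
interpretation VP: vector_space_pair sc sc by unfold_locales

definition good :: "(nat \<times> int) set" where "good = {(k, l). p dvd k \<and> int p dvd l}"
definition fb :: "'h \<Rightarrow> 'h" where "fb b = (if b \<in> hbasis A B ` good then b else 0)"
definition T :: "'h \<Rightarrow> 'h" where "T = VP.construct (range (hbasis A B)) fb"

lemma linT: "Vector_Spaces.linear sc sc T"
  unfolding T_def by (rule VP.linear_construct) (use basis_indep in simp)

interpretation TL: Vector_Spaces.linear sc sc T by (rule linT)

lemma T_basis: "T (hbasis A B i) = (if i \<in> good then hbasis A B i else 0)"
proof -
  have "T (hbasis A B i) = fb (hbasis A B i)"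
    unfolding T_def by (rule VP.construct_basis) (use basis_indep in auto)
  then show ?thesis unfolding fb_def using basis_inj by (auto simp: inj_eq)
qed

lemma T_term: assumes "i \<in> good \<Longrightarrow> c = 0" shows "T (sc c (hbasis A B i)) = 0"
  using assms by (auto simp: TL.scale T_basis)

lemma qpow: "p dvd e \<Longrightarrow> q ^ e = 1"
  by (auto simp: power_mult q_p elim!: dvdE)

lemma qpow2: "p dvd Suc k \<Longrightarrow> p dvd n \<Longrightarrow> q ^ (k + Suc n) = 1"
proof -
  assume "p dvd Suc k" "p dvd n"
  then have "p dvd Suc k + n" by (rule dvd_add)
  then show ?thesis by (intro qpow) simp
qed

lemma p2: "p \<noteq> 1" using q_p q_ne1 by auto

lemma hb_pos: "hbasis A B (k, int n) = L^k * A^n"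
  by (simp add: hbasis_def)
lemma hb_neg: "hbasis A B (k, - int m) = B^m * L^k"
  by (simp add: hbasis_def)

lemma isc: "sc c 1 * x = sc c x" by (rule sc_left[symmetric])

lemma T_cancel: assumes "T (sc c x) = 0" "c \<noteq> 0" shows "T x = 0"
  using assms by (simp add: TL.scale)

lemma c1: "1 - Q^k = sc (1 - q^k) 1" by (simp add: idiff ipow)
lemma c2: "Q^k - 1 = sc (q^k - 1) 1" by (simp add: idiff ipow)
lemma c3: "Q^k * (Q - 1) = sc (q^k * (q - 1)) 1"
proof -
  have "Q - 1 = sc (q - 1) 1" by (simp add: idiff)
  then show ?thesis by (simp add: ipow imult)
qed
lemma q0: "q \<noteq> 0" using q_p p_pos by (cases "q = 0") (auto simp: power_0_left)
lemma c0nz: "q^k * (q - 1) \<noteq> 0" using q_ne1 q0 by simp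

lemma gd: "(k, l) \<in> good \<longleftrightarrow> p dvd k \<and> int p dvd l" by (simp add: good_def)

lemma TA: "T (hbasis A B i * A - A * hbasis A B i) = 0"
proof (cases i)
  case (Pair k l)
  show ?thesis
  proof (cases "l \<ge> 0")
    case True
    define n where "n = nat l"
    have l: "l = int n" using True unfolding n_def by simp
    have "hbasis A B i * A - A * hbasis A B i = sc (1 - q^k) (hbasis A B (k, int (Suc n)))"
      by (simp only: Pair l hb_pos com_a c1 isc)
    moreover have "T (sc (1 - q^k) (hbasis A B (k, int (Suc n)))) = 0"
      by (rule T_term) (auto simp: gd qpow)
    ultimately show ?thesis by simp
  next
    case False
    define n where "n = nat (- l - 1)"
    have l: "l = - int (Suc n)" using False unfolding n_def by simp
    have "sc (q^k * (q - 1)) (hbasis A B i * A - A * hbasis A B i)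
       = sc (1 - q^(k + Suc n)) (hbasis A B (Suc k, - int n)) + sc (q^k - 1) (hbasis A B (k, - int n))"
      using com_d[of k n] by (simp only: Pair l hb_neg c1 c2 c3 isc)
    moreover have "T (sc (1 - q^(k + Suc n)) (hbasis A B (Suc k, - int n))) = 0"
      by (rule T_term) (auto simp: gd dest: qpow2[of k n])
    moreover have "T (sc (q^k - 1) (hbasis A B (k, - int n))) = 0"
      by (rule T_term) (auto simp: gd qpow)
    ultimately have "T (sc (q^k * (q - 1)) (hbasis A B i * A - A * hbasis A B i)) = 0"
      by (simp add: TL.add)
    then show ?thesis by (rule T_cancel) (rule c0nz)
  qed
qed

lemma TB: "T (hbasis A B i * B - B * hbasis A B i) = 0"
proof (cases i)
  case (Pair k l)
  show ?thesis
  proof (cases "l \<ge> 1")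
    case True
    define n where "n = nat (l - 1)"
    have l: "l = int (Suc n)" using True unfolding n_def by simp
    have "sc (q^k * (q - 1)) (hbasis A B i * B - B * hbasis A B i)
       = sc (q^(k + Suc n) - 1) (hbasis A B (Suc k, int n)) + sc (1 - q^k) (hbasis A B (k, int n))"
      using com_b[of k n] by (simp only: Pair l hb_pos c1 c2 c3 isc)
    moreover have "T (sc (q^(k + Suc n) - 1) (hbasis A B (Suc k, int n))) = 0"
      by (rule T_term) (auto simp: gd dest: qpow2[of k n])
    moreover have "T (sc (1 - q^k) (hbasis A B (k, int n))) = 0"
      by (rule T_term) (auto simp: gd qpow)
    ultimately have "T (sc (q^k * (q - 1)) (hbasis A B i * B - B * hbasis A B i)) = 0"
      by (simp add: TL.add)
    then show ?thesis by (rule T_cancel) (rule c0nz)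
  next
    case False
    define m where "m = nat (- l)"
    have l: "l = - int m" using False unfolding m_def by simp
    have "hbasis A B i * B - B * hbasis A B i = sc (q^k - 1) (hbasis A B (k, - int (Suc m)))"
      by (simp only: Pair l hb_neg com_c c2 isc)
    moreover have "T (sc (q^k - 1) (hbasis A B (k, - int (Suc m)))) = 0"
      by (rule T_term) (auto simp: gd qpow)
    ultimately show ?thesis by simp
  qed
qed

lemma scomm: "sc c x * y - y * sc c x = sc c (x * y - y * x)"
  by (simp add: M.scale_right_diff_distrib scl[symmetric] scr[symmetric])
lemma scomm2: "x * sc c y - sc c y * x = sc c (x * y - y * x)"
  by (simp add: M.scale_right_diff_distrib scl[symmetric] scr[symmetric])

lemma comm_all: assumes "\<And>i. T (hbasis A B i * y - y * hbasis A B i) = 0"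
  shows "T (x * y - y * x) = 0"
proof -
  let ?S = "{x. T (x * y - y * x) = 0}"
  have "M.subspace ?S"
    unfolding M.subspace_def
  proof (intro conjI ballI allI)
    show "0 \<in> ?S" by (simp add: TL.zero)
  next
    fix a b assume "a \<in> ?S" "b \<in> ?S"
    moreover have "(a + b) * y - y * (a + b) = (a * y - y * a) + (b * y - y * b)"
      by (simp add: algebra_simps)
    ultimately show "a + b \<in> ?S" by (simp add: TL.add)
  next
    fix c a assume "a \<in> ?S" then show "sc c a \<in> ?S" by (simp add: scomm TL.scale)
  qed
  moreover have "range (hbasis A B) \<subseteq> ?S" using assms by auto
  ultimately have "M.span (range (hbasis A B)) \<subseteq> ?S" by (rule M.span_minimal[rotated])
  then show ?thesis using basis_span by auto
qed

lemma comm_UNIV: "T (x * y - y * x) = 0"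
proof -
  let ?C = "{y. \<forall>x. T (x * y - y * x) = 0}"
  have sub: "M.subspace ?C"
    unfolding M.subspace_def
  proof (intro conjI ballI allI)
    show "0 \<in> ?C" by (simp add: TL.zero)
  next
    fix a b assume "a \<in> ?C" "b \<in> ?C"
    moreover have "x * (a + b) - (a + b) * x = (x * a - a * x) + (x * b - b * x)" for x
      by (simp add: algebra_simps)
    ultimately show "a + b \<in> ?C" by (simp add: TL.add)
  next
    fix c a assume "a \<in> ?C" then show "sc c a \<in> ?C" by (simp add: scomm2 TL.scale)
  qed
  have mul: "a * b \<in> ?C" if "a \<in> ?C" "b \<in> ?C" for a b
  proof -
    have "T (x * (a * b) - a * b * x) = 0" for x
    proof -
      have "x * (a * b) - a * b * x = ((x * a) * b - b * (x * a)) + ((b * x) * a - a * (b * x))"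
        by (simp add: algebra_simps)
      then show ?thesis using that by (simp add: TL.add)
    qed
    then show ?thesis by simp
  qed
  have A: "A \<in> ?C" using comm_all[OF TA] by simp
  have B: "B \<in> ?C" using comm_all[OF TB] by simp
  have one: "1 \<in> ?C" by (simp add: TL.zero)
  have Lc: "L \<in> ?C" unfolding Lam_def by (rule M.subspace_diff[OF sub mul[OF A B] mul[OF B A]])
  have pw: "a ^ n \<in> ?C" if "a \<in> ?C" for a n
    by (induction n) (use one mul that in auto)
  have h1: "L^k * A^n \<in> ?C" for k n by (rule mul[OF pw[OF Lc] pw[OF A]])
  have h2: "B^n * L^k \<in> ?C" for k n by (rule mul[OF pw[OF B] pw[OF Lc]])
  have "hbasis A B i \<in> ?C" for i
  proof (cases i)
    case (Pair k l)
    show ?thesis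
    proof (cases "l \<ge> 0")
      case True
      then have "hbasis A B i = L^k * A^(nat l)" by (simp add: Pair hbasis_def)
      then show ?thesis using h1 by simp
    next
      case False
      then have "hbasis A B i = B^(nat (- l)) * L^k" by (simp add: Pair hbasis_def)
      then show ?thesis using h2 by simp
    qed
  qed
  then have "range (hbasis A B) \<subseteq> ?C" by auto
  then have "M.span (range (hbasis A B)) \<subseteq> ?C" by (rule M.span_minimal[OF _ sub])
  then show ?thesis using basis_span by auto
qed

lemma main: "lie_generated sc {A, B} \<inter> M.span (Nset A B p) = {0}"
proof -
  let ?K = "{v. T v = 0}"
  have lieK: "lie_subalgebra sc ?K"
    unfolding lie_subalgebra_def using comm_UNIV TL.subspace_kernel by auto
  have "A = hbasis A B (0, 1)" by (simp add: hbasis_def)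
  moreover have "(0, 1) \<notin> good" using p2 by (auto simp: gd)
  ultimately have TA0: "T A = 0" using T_basis[of "(0, 1)"] by simp
  have "B = hbasis A B (0, -1)" by (simp add: hbasis_def)
  moreover have "(0, -1) \<notin> good" using p2 by (auto simp: gd)
  ultimately have TB0: "T B = 0" using T_basis[of "(0, -1)"] by simp
  have gen: "lie_generated sc {A, B} \<subseteq> ?K"
    unfolding lie_generated_def using lieK TA0 TB0 by auto
  let ?F = "{v. T v = v}"
  have subF: "M.subspace ?F"
    unfolding M.subspace_def by (auto simp: TL.zero TL.add TL.scale)
  have "Nset A B p \<subseteq> ?F"
  proof
    fix v assume "v \<in> Nset A B p"
    then obtain m n where mn: "p dvd m" "p dvd n" and
      v: "v = hbasis A B (n, - int m) \<or> v = hbasis A B (n, int m)"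
      unfolding Nset_def by (auto simp: hb_pos hb_neg)
    then show "v \<in> ?F" by (auto simp: T_basis gd)
  qed
  then have spF: "M.span (Nset A B p) \<subseteq> ?F" by (rule M.span_minimal[OF _ subF])
  have z1: "0 \<in> lie_generated sc {A, B}"
    unfolding lie_generated_def lie_subalgebra_def by (auto simp: M.subspace_0)
  show ?thesis
  proof
    show "lie_generated sc {A, B} \<inter> M.span (Nset A B p) \<subseteq> {0}"
    proof
      fix x assume "x \<in> lie_generated sc {A, B} \<inter> M.span (Nset A B p)"
      then have "T x = 0" "T x = x" using gen spF by blast+
      then show "x \<in> {0}" by simp
    qed
    show "{0} \<subseteq> lie_generated sc {A, B} \<inter> M.span (Nset A B p)"
      using z1 M.span_zero by auto
  qed
qed

end

theorem corollary1:
  fixes sc :: "'f::field \<Rightarrow> 'h::ring_1 \<Rightarrow> 'h"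
    and q :: 'f and p :: nat and A B :: 'h
  assumes alg: "is_falgebra sc"
    and rel: "A * B - sc q (B * A) = 1"
    and basis_inj: "inj (hbasis A B)"
    and basis_indep: "module.independent sc (range (hbasis A B))"
    and basis_span: "module.span sc (range (hbasis A B)) = UNIV"
    and q_ne1: "q \<noteq> 1"
    and p_pos: "0 < p"
    and q_p: "q ^ p = 1"
    and p_least: "\<forall>m. 0 < m \<and> m < p \<longrightarrow> q ^ m \<noteq> 1"
  shows "lie_generated sc {A, B} \<inter> module.span sc (Nset A B p) = {0}"
proof -
  interpret H: hmain sc q A B p
    by unfold_locales (fact alg rel basis_inj basis_indep basis_span q_ne1 p_pos q_p)+
  show ?thesis by (rule H.main)
qed

end
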